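(* Let $(X,d)$ be a locally compact, geodesically complete CAT(0)-space connected at infinity, and let $d'$ be a metric on $X$ such that $(X,d')$ is a locally compact geodesically complete CAT(0)-space and $d(x,y)\le1\iff d'(x,y)\le1$ for all $x,y\in X$. Let $a,b$ be complete geodesics of $(X,d)$ connected by an asymptotic chain $a=a_0,a_1,\dots,a_n=b$ such that for every $i$ the image of $a_i$ is also the image of a complete geodesic of $(X,d')$. If $d(a(t_1),a(t_2))=d'(a(t_1),a(t_2))$ for all $t_1,t_2\in\mathbb R$, then $d(b(t_1),b(t_2))=d'(b(t_1),b(t_2))$ for all $t_1,t_2\in\mathbb R$.
   Context: Two geodesic rays in a CAT(0)-space are asymptotic if their Hausdorff distance is finite; two complete geodesics are asymptotic (in some direction) if they contain asymptotic rays. Geodesics $a,b$ are connected by an asymptotic chain if there is a finite sequence of complete geodesics $a=a_0,\dots,a_n=b$ such that $a_{i-1}$ and $a_i$ are asymptotic in some direction for each $1\le i\le n$. Geodesically complete: geodesic, and every geodesic segment lies in a complete geodesic. Connected at infinity: the complement of every metric ball is path connected. *)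

theory Defs
  imports "HOL-Analysis.Analysis"
begin

definition geodesic_segment :: "'a set \<Rightarrow> ('a \<Rightarrow> 'a \<Rightarrow> real) \<Rightarrow> (real \<Rightarrow> 'a) \<Rightarrow> 'a \<Rightarrow> 'a \<Rightarrow> bool" where
  "geodesic_segment X d c x y \<longleftrightarrow>
     c 0 = x \<and> c (d x y) = y \<and> c ` {0..d x y} \<subseteq> X \<and>
     (\<forall>s\<in>{0..d x y}. \<forall>t\<in>{0..d x y}. d (c s) (c t) = \<bar>s - t\<bar>)"

definition geodesic_space :: "'a set \<Rightarrow> ('a \<Rightarrow> 'a \<Rightarrow> real) \<Rightarrow> bool" where
  "geodesic_space X d \<longleftrightarrow> (\<forall>x\<in>X. \<forall>y\<in>X. \<exists>c. geodesic_segment X d c x y)"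

text \<open>CAT(0) (Bridson--Haefliger II.1.1): geodesic, and for every geodesic triangle and
  points p, q on two of its sides (sharing a vertex x) the distance d p q is at most the
  distance of the comparison points in the Euclidean comparison triangle.  The comparison
  distance is given by the law of cosines at the comparison vertex of x.\<close>
definition CAT0 :: "'a set \<Rightarrow> ('a \<Rightarrow> 'a \<Rightarrow> real) \<Rightarrow> bool" where
  "CAT0 X d \<longleftrightarrow> geodesic_space X d \<and>
     (\<forall>x\<in>X. \<forall>y\<in>X. \<forall>z\<in>X. \<forall>c1 c2 c3.
        geodesic_segment X d c1 x y \<and> geodesic_segment X d c2 x z \<and> geodesic_segment X d c3 y z \<longrightarrow>
        (\<forall>s\<in>{0..d x y}. \<forall>t\<in>{0..d x z}.
           (d (c1 s) (c2 t))\<^sup>2 \<le> s\<^sup>2 + t\<^sup>2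
              - s * t * ((d x y)\<^sup>2 + (d x z)\<^sup>2 - (d y z)\<^sup>2) / (d x y * d x z)))"

definition complete_geodesic :: "'a set \<Rightarrow> ('a \<Rightarrow> 'a \<Rightarrow> real) \<Rightarrow> (real \<Rightarrow> 'a) \<Rightarrow> bool" where
  "complete_geodesic X d g \<longleftrightarrow> range g \<subseteq> X \<and> (\<forall>s t. d (g s) (g t) = \<bar>s - t\<bar>)"

definition geodesic_ray :: "'a set \<Rightarrow> ('a \<Rightarrow> 'a \<Rightarrow> real) \<Rightarrow> (real \<Rightarrow> 'a) \<Rightarrow> bool" where
  "geodesic_ray X d r \<longleftrightarrow> r ` {0..} \<subseteq> X \<and> (\<forall>s\<ge>0. \<forall>t\<ge>0. d (r s) (r t) = \<bar>s - t\<bar>)"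

definition geodesically_complete :: "'a set \<Rightarrow> ('a \<Rightarrow> 'a \<Rightarrow> real) \<Rightarrow> bool" where
  "geodesically_complete X d \<longleftrightarrow> geodesic_space X d \<and>
     (\<forall>x\<in>X. \<forall>y\<in>X. \<forall>c. geodesic_segment X d c x y \<longrightarrow>
        (\<exists>g. complete_geodesic X d g \<and> c ` {0..d x y} \<subseteq> range g))"

definition asymptotic_rays :: "('a \<Rightarrow> 'a \<Rightarrow> real) \<Rightarrow> (real \<Rightarrow> 'a) \<Rightarrow> (real \<Rightarrow> 'a) \<Rightarrow> bool" where
  "asymptotic_rays d r1 r2 \<longleftrightarrow> (\<exists>C.
     (\<forall>t\<ge>0. \<exists>s\<ge>0. d (r1 t) (r2 s) \<le> C) \<and> (\<forall>t\<ge>0. \<exists>s\<ge>0. d (r2 t) (r1 s) \<le> C))"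

definition asymptotic_geodesics :: "'a set \<Rightarrow> ('a \<Rightarrow> 'a \<Rightarrow> real) \<Rightarrow> (real \<Rightarrow> 'a) \<Rightarrow> (real \<Rightarrow> 'a) \<Rightarrow> bool" where
  "asymptotic_geodesics X d a b \<longleftrightarrow> (\<exists>r1 r2. geodesic_ray X d r1 \<and> geodesic_ray X d r2 \<and>
     r1 ` {0..} \<subseteq> range a \<and> r2 ` {0..} \<subseteq> range b \<and> asymptotic_rays d r1 r2)"

definition connected_at_infinity :: "'a set \<Rightarrow> ('a \<Rightarrow> 'a \<Rightarrow> real) \<Rightarrow> bool" where
  "connected_at_infinity X d \<longleftrightarrow> (\<forall>x\<in>X. \<forall>r.
     path_connectedin (Metric_space.mtopology X d) (X - Metric_space.mball X d x r))"

end

theory Submission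
  imports Defs
begin

lemma ceil_trick_lt:
  fixes u v :: "real \<Rightarrow> real"
  assumes sc: "\<And>s n. s \<ge> s0 \<Longrightarrow> u s \<le> real n \<Longrightarrow> v s \<le> real n"
  and cu: "\<And>\<eta>. \<eta> > 0 \<Longrightarrow> \<exists>S. \<forall>s\<ge>S. \<bar>u s - s - \<alpha>\<bar> \<le> \<eta>"
  and cv: "\<And>\<eta>. \<eta> > 0 \<Longrightarrow> \<exists>S. \<forall>s\<ge>S. \<bar>v s - s - \<beta>\<bar> \<le> \<eta>"
  and lt: "\<alpha> < \<beta>"
  shows False
proof -
  define \<eta> where "\<eta> = (\<beta> - \<alpha>) / 4"
  have "\<eta> > 0" using lt by (simp add: \<eta>_def)
  obtain S1 where S1: "\<forall>s\<ge>S1. \<bar>u s - s - \<alpha>\<bar> \<le> \<eta>" using cu[OF \<open>\<eta> > 0\<close>] by blast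
  obtain S2 where S2: "\<forall>s\<ge>S2. \<bar>v s - s - \<beta>\<bar> \<le> \<eta>" using cv[OF \<open>\<eta> > 0\<close>] by blast
  define M where "M = max s0 (max S1 S2)"
  define n where "n = nat \<lceil>M + (\<alpha> + \<beta>) / 2\<rceil>"
  define s where "s = real n - (\<alpha> + \<beta>) / 2"
  have "real n \<ge> M + (\<alpha> + \<beta>) / 2" unfolding n_def by linarith
  hence sM: "s \<ge> M" by (simp add: s_def)
  hence "s \<ge> s0" "s \<ge> S1" "s \<ge> S2" by (auto simp: M_def)
  have "u s \<le> s + \<alpha> + \<eta>" using S1 \<open>s \<ge> S1\<close> by force
  also have "\<dots> \<le> real n" using lt by (simp add: s_def \<eta>_def field_simps)
  finally have "v s \<le> real n" using sc \<open>s \<ge> s0\<close> by blast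
  moreover have "v s \<ge> s + \<beta> - \<eta>" using S2 \<open>s \<ge> S2\<close> by force
  moreover have "s + \<beta> - \<eta> > real n" using lt by (simp add: s_def \<eta>_def field_simps)
  ultimately show False by linarith
qed

lemma ceil_trick:
  fixes u v :: "real \<Rightarrow> real"
  assumes sc: "\<And>s n. s \<ge> s0 \<Longrightarrow> (u s \<le> real n \<longleftrightarrow> v s \<le> real n)"
  and cu: "\<And>\<eta>. \<eta> > 0 \<Longrightarrow> \<exists>S. \<forall>s\<ge>S. \<bar>u s - s - \<alpha>\<bar> \<le> \<eta>"
  and cv: "\<And>\<eta>. \<eta> > 0 \<Longrightarrow> \<exists>S. \<forall>s\<ge>S. \<bar>v s - s - \<beta>\<bar> \<le> \<eta>"
  shows "\<alpha> = \<beta>"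
proof (rule ccontr)
  assume "\<alpha> \<noteq> \<beta>"
  then consider "\<alpha> < \<beta>" | "\<beta> < \<alpha>" by linarith
  then show False
  proof cases
    case 1 show False by (rule ceil_trick_lt[of s0 u v \<alpha> \<beta>]) (use sc cu cv 1 in auto)
  next
    case 2 show False by (rule ceil_trick_lt[of s0 v u \<beta> \<alpha>]) (use sc cu cv 2 in auto)
  qed
qed

lemma psi_core:
  fixes \<psi> k :: "real \<Rightarrow> real"
  assumes h1: "\<And>x y n. \<bar>x - y\<bar> \<le> real n \<longleftrightarrow> \<bar>\<psi> x - \<psi> y\<bar> \<le> real n"
  and h2: "\<And>x y. \<bar>k x - k y\<bar> \<le> \<bar>\<psi> x - \<psi> y\<bar>"
  and h3: "\<And>x y. \<bar>k x - k y\<bar> \<le> \<bar>x - y\<bar>"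
  and h4: "\<And>t. k t + t \<le> K0"
  and pos: "\<And>y. y \<ge> N0 \<Longrightarrow> \<psi> y \<ge> \<psi> 0 + y - c0"
  shows "\<exists>L. \<forall>x. \<psi> x = x + L"
proof -
  have f1: "\<bar>\<psi> x - \<psi> y\<bar> \<le> \<bar>x - y\<bar> + 1" for x y
  proof -
    have "\<bar>x - y\<bar> \<le> real (nat \<lceil>\<bar>x - y\<bar>\<rceil>)" by linarith
    hence "\<bar>\<psi> x - \<psi> y\<bar> \<le> real (nat \<lceil>\<bar>x - y\<bar>\<rceil>)" using h1 by blast
    moreover have "real (nat \<lceil>\<bar>x - y\<bar>\<rceil>) \<le> \<bar>x - y\<bar> + 1" by linarith
    ultimately show ?thesis by linarith
  qed
  define m where "m t = k t + t" for t
  have mmono: "m x \<le> m y" if "x \<le> y" for x y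
    using h3[of x y] that by (simp add: m_def abs_if split: if_splits)
  define Y where "Y x = max (max N0 0) (\<bar>x\<bar> + 1 + c0)" for x
  have psiY: "\<psi> x \<le> \<psi> y" if "y \<ge> Y x" for x y
  proof -
    have "\<psi> y \<ge> \<psi> 0 + y - c0" using pos that by (simp add: Y_def)
    moreover have "\<psi> x \<le> \<psi> 0 + \<bar>x\<bar> + 1" using f1[of x 0] by simp
    ultimately show ?thesis using that by (simp add: Y_def)
  qed
  define G where "G y = \<psi> y + k y" for y
  have Gmono: "G x \<le> G y" if "y \<ge> Y x" for x y
  proof -
    have "k x - k y \<le> \<bar>\<psi> y - \<psi> x\<bar>" using h2[of x y] by (simp add: abs_minus_commute)
    also have "\<dots> = \<psi> y - \<psi> x" using psiY[OF that] by simp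
    finally show ?thesis by (simp add: G_def)
  qed
  define T where "T = {max N0 0..}"
  have Gbdd: "G y \<le> \<psi> 0 + 1 + K0" if "y \<in> T" for y
  proof -
    have "\<psi> y \<le> \<psi> 0 + \<bar>y\<bar> + 1" using f1[of y 0] by simp
    moreover have "k y \<le> K0 - y" using h4[of y] by simp
    ultimately show ?thesis using that by (simp add: G_def T_def)
  qed
  define S where "S = Sup (G ` T)"
  have TY: "Y x \<in> T" for x by (simp add: T_def Y_def)
  have bddG: "bdd_above (G ` T)" using Gbdd by (intro bdd_aboveI2[where M="\<psi> 0 + 1 + K0"]) auto
  have GS: "G y \<le> S" if "y \<in> T" for y
    unfolding S_def using bddG that by (simp add: cSUP_upper)
  have Gconv: "\<exists>Y0. \<forall>y\<ge>Y0. \<bar>G y - S\<bar> \<le> \<eta>" if "\<eta> > 0" for \<eta>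
  proof -
    have "T \<noteq> {}" using TY by blast
    then obtain x where x: "x \<in> T" "G x > S - \<eta>"
      using less_cSUP_iff[OF _ bddG, of "S - \<eta>"] \<open>\<eta> > 0\<close> unfolding S_def by auto
    have "\<forall>y\<ge>Y x. \<bar>G y - S\<bar> \<le> \<eta>"
    proof (intro allI impI)
      fix y assume "y \<ge> Y x"
      hence "y \<in> T" using TY[of x] by (auto simp: T_def)
      show "\<bar>G y - S\<bar> \<le> \<eta>" using Gmono[OF \<open>y \<ge> Y x\<close>] GS[OF \<open>y \<in> T\<close>] x by linarith
    qed
    thus ?thesis by blast
  qed
  define K where "K = Sup (range m)"
  have bddm: "bdd_above (range m)" using h4 by (intro bdd_aboveI2[where M=K0]) (auto simp: m_def)
  have mK: "m y \<le> K" for y unfolding K_def using bddm by (simp add: cSUP_upper)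
  have mconv: "\<exists>Y0. \<forall>y\<ge>Y0. \<bar>m y - K\<bar> \<le> \<eta>" if "\<eta> > 0" for \<eta>
  proof -
    obtain x where x: "m x > K - \<eta>"
      using less_cSUP_iff[OF _ bddm, of "K - \<eta>"] \<open>\<eta> > 0\<close> unfolding K_def by auto
    have "\<forall>y\<ge>x. \<bar>m y - K\<bar> \<le> \<eta>" using mmono mK x by (smt (verit))
    thus ?thesis by blast
  qed
  define L where "L = S - K"
  have Dconv: "\<exists>Y0. \<forall>y\<ge>Y0. \<bar>\<psi> y - y - L\<bar> \<le> \<eta>" if "\<eta> > 0" for \<eta>
  proof -
    have h2: "\<eta>/2 > 0" using that by simp
    obtain Y1 where Y1: "\<forall>y\<ge>Y1. \<bar>G y - S\<bar> \<le> \<eta>/2" using Gconv[OF h2] by blast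
    obtain Y2 where Y2: "\<forall>y\<ge>Y2. \<bar>m y - K\<bar> \<le> \<eta>/2" using mconv[OF h2] by blast
    have "\<forall>y\<ge>max Y1 Y2. \<bar>\<psi> y - y - L\<bar> \<le> \<eta>"
    proof (intro allI impI)
      fix y assume "max Y1 Y2 \<le> y"
      hence "\<bar>G y - S\<bar> \<le> \<eta>/2" "\<bar>m y - K\<bar> \<le> \<eta>/2" using Y1 Y2 by auto
      thus "\<bar>\<psi> y - y - L\<bar> \<le> \<eta>" by (simp add: G_def m_def L_def abs_if split: if_splits)
    qed
    thus ?thesis by blast
  qed
  have "\<psi> x = x + L" for x
  proof -
    have "-x = L - \<psi> x"
    proof (rule ceil_trick[of "Y x" "\<lambda>s. \<bar>s - x\<bar>" "\<lambda>s. \<bar>\<psi> s - \<psi> x\<bar>"])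
      show "\<bar>s - x\<bar> \<le> real n \<longleftrightarrow> \<bar>\<psi> s - \<psi> x\<bar> \<le> real n" if "Y x \<le> s" for s n
        using h1 by blast
      show "\<exists>S. \<forall>s\<ge>S. \<bar>\<bar>s - x\<bar> - s - - x\<bar> \<le> \<eta>" if "\<eta> > 0" for \<eta>
        using that by (intro exI[of _ x]) auto
      show "\<exists>S. \<forall>s\<ge>S. \<bar>\<bar>\<psi> s - \<psi> x\<bar> - s - (L - \<psi> x)\<bar> \<le> \<eta>" if "\<eta> > 0" for \<eta>
      proof -
        obtain Y0 where Y0: "\<forall>y\<ge>Y0. \<bar>\<psi> y - y - L\<bar> \<le> \<eta>" using Dconv \<open>\<eta> > 0\<close> by blast
        have "\<forall>s\<ge>max Y0 (Y x). \<bar>\<bar>\<psi> s - \<psi> x\<bar> - s - (L - \<psi> x)\<bar> \<le> \<eta>"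
        proof (intro allI impI)
          fix s assume "max Y0 (Y x) \<le> s"
          hence "\<psi> x \<le> \<psi> s" "\<bar>\<psi> s - s - L\<bar> \<le> \<eta>" using psiY Y0 by auto
          thus "\<bar>\<bar>\<psi> s - \<psi> x\<bar> - s - (L - \<psi> x)\<bar> \<le> \<eta>" by simp
        qed
        thus ?thesis by blast
      qed
    qed
    thus ?thesis by simp
  qed
  thus ?thesis by blast
qed

lemma psi_sign:
  fixes \<psi> k :: "real \<Rightarrow> real"
  assumes h1: "\<And>x y n. \<bar>x - y\<bar> \<le> real n \<longleftrightarrow> \<bar>\<psi> x - \<psi> y\<bar> \<le> real n"
  and h2: "\<And>x y. \<bar>k x - k y\<bar> \<le> \<bar>\<psi> x - \<psi> y\<bar>"
  and h4: "\<And>t. k t + t \<le> K0"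
  shows "\<exists>N0 c0. (\<forall>y\<ge>N0. \<psi> y \<ge> \<psi> 0 + y - c0) \<or> (\<forall>y\<ge>N0. - \<psi> y \<ge> - \<psi> 0 + y - c0)"
proof -
  define c0 where "c0 = K0 - k 0"
  have c0: "c0 \<ge> 0" using h4[of 0] by (simp add: c0_def)
  have lb: "\<bar>\<psi> y - \<psi> 0\<bar> \<ge> y - c0" for y
  proof -
    have "k 0 - k y \<le> \<bar>\<psi> y - \<psi> 0\<bar>" using h2[of 0 y] by (simp add: abs_minus_commute)
    thus ?thesis using h4[of y] by (simp add: c0_def)
  qed
  define N0 where "N0 = c0 + 2"
  define p where "p = \<psi> N0 - \<psi> 0"
  have near: "\<bar>\<psi> y - \<psi> z\<bar> \<le> 1" if "\<bar>y - z\<bar> \<le> 1" for y z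
    using h1[of y z 1] that by simp
  have ind: "\<forall>y. N0 \<le> y \<and> y \<le> N0 + real n \<longrightarrow> (\<psi> y - \<psi> 0 > 0 \<longleftrightarrow> p > 0)" for n :: nat
  proof (induction n)
    case 0
    then show ?case by (auto simp: p_def)
  next
    case (Suc n)
    show ?case
    proof (intro allI impI)
      fix y assume y: "N0 \<le> y \<and> y \<le> N0 + real (Suc n)"
      define z where "z = max N0 (y - 1)"
      have z: "N0 \<le> z \<and> z \<le> N0 + real n"
      proof (cases "y \<le> N0 + real n")
        case True then show ?thesis using y by (auto simp: z_def)
      next
        case False then show ?thesis using y by (auto simp: z_def)
      qed
      have "\<bar>y - z\<bar> \<le> 1" using y by (auto simp: z_def)
      hence "\<bar>\<psi> y - \<psi> z\<bar> \<le> 1" by (rule near)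
      moreover have "\<bar>\<psi> y - \<psi> 0\<bar> \<ge> 2" using lb[of y] y by (simp add: N0_def)
      moreover have "\<bar>\<psi> z - \<psi> 0\<bar> \<ge> 2" using lb[of z] z by (simp add: N0_def)
      ultimately have "\<psi> y - \<psi> 0 > 0 \<longleftrightarrow> \<psi> z - \<psi> 0 > 0" by (auto simp: abs_if split: if_splits)
      with Suc z show "\<psi> y - \<psi> 0 > 0 \<longleftrightarrow> p > 0" by blast
    qed
  qed
  have all: "\<psi> y - \<psi> 0 > 0 \<longleftrightarrow> p > 0" if "y \<ge> N0" for y
  proof -
    have "y \<le> N0 + real (nat \<lceil>y - N0\<rceil>)" by linarith
    thus ?thesis using ind[of "nat \<lceil>y - N0\<rceil>"] that by blast
  qed
  show ?thesis
  proof (cases "p > 0")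
    case True
    have "\<forall>y\<ge>N0. \<psi> y \<ge> \<psi> 0 + y - c0"
    proof (intro allI impI)
      fix y assume "y \<ge> N0"
      hence "\<psi> y - \<psi> 0 > 0" using all True by blast
      thus "\<psi> y \<ge> \<psi> 0 + y - c0" using lb[of y] by simp
    qed
    thus ?thesis by blast
  next
    case False
    have "\<forall>y\<ge>N0. - \<psi> y \<ge> - \<psi> 0 + y - c0"
    proof (intro allI impI)
      fix y assume "y \<ge> N0"
      hence "\<not> \<psi> y - \<psi> 0 > 0" using all False by blast
      thus "- \<psi> y \<ge> - \<psi> 0 + y - c0" using lb[of y] by simp
    qed
    thus ?thesis by blast
  qed
qed

lemma psi_iso_global:
  fixes \<psi> k :: "real \<Rightarrow> real"
  assumes h1: "\<And>x y n. \<bar>x - y\<bar> \<le> real n \<longleftrightarrow> \<bar>\<psi> x - \<psi> y\<bar> \<le> real n"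
  and h2: "\<And>x y. \<bar>k x - k y\<bar> \<le> \<bar>\<psi> x - \<psi> y\<bar>"
  and h3: "\<And>x y. \<bar>k x - k y\<bar> \<le> \<bar>x - y\<bar>"
  and h4: "\<And>t. k t + t \<le> K0"
  shows "\<bar>\<psi> x - \<psi> y\<bar> = \<bar>x - y\<bar>"
proof -
  obtain N0 c0 where "(\<forall>y\<ge>N0. \<psi> y \<ge> \<psi> 0 + y - c0) \<or> (\<forall>y\<ge>N0. - \<psi> y \<ge> - \<psi> 0 + y - c0)"
    using psi_sign[OF h1 h2 h4] by blast
  then show ?thesis
  proof
    assume pos: "\<forall>y\<ge>N0. \<psi> y \<ge> \<psi> 0 + y - c0"
    obtain L where "\<forall>x. \<psi> x = x + L" using psi_core[OF h1 h2 h3 h4, of N0 c0] pos by blast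
    thus ?thesis by simp
  next
    assume neg: "\<forall>y\<ge>N0. - \<psi> y \<ge> - \<psi> 0 + y - c0"
    have h1': "\<bar>x - y\<bar> \<le> real n \<longleftrightarrow> \<bar>(- \<psi> x) - (- \<psi> y)\<bar> \<le> real n" for x y n
      using h1[of x y n] by (simp add: abs_minus_commute)
    have h2': "\<bar>k x - k y\<bar> \<le> \<bar>(- \<psi> x) - (- \<psi> y)\<bar>" for x y
      using h2[of x y] by (simp add: abs_minus_commute)
    obtain L where "\<forall>x. - \<psi> x = x + L"
      using psi_core[of "\<lambda>x. - \<psi> x" k K0 N0 c0, OF h1' h2' h3 h4] neg by blast
    hence "\<psi> x = - x - L" for x by (metis add.commute diff_minus_eq_add minus_diff_eq minus_minus)
    thus ?thesis by (simp add: abs_minus_commute)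
  qed
qed

lemma psi_iso:
  fixes \<psi> k :: "real \<Rightarrow> real"
  assumes h1: "\<And>x y n. \<bar>x - y\<bar> \<le> real n \<longleftrightarrow> \<bar>\<psi> x - \<psi> y\<bar> \<le> real n"
  and h2: "\<And>x y. \<bar>k x - k y\<bar> \<le> \<bar>\<psi> x - \<psi> y\<bar>"
  and h3: "\<And>x y. \<bar>k x - k y\<bar> \<le> \<bar>x - y\<bar>"
  and h4: "(\<forall>t\<ge>T. k t + t \<le> K0) \<or> (\<forall>t\<le>T. k t - t \<le> K0)"
  shows "\<bar>\<psi> x - \<psi> y\<bar> = \<bar>x - y\<bar>"
  using h4
proof
  assume a: "\<forall>t\<ge>T. k t + t \<le> K0"
  have "k t + t \<le> K0" for t
  proof (cases "t \<ge> T")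
    case True then show ?thesis using a by blast
  next
    case False
    have "k t - k T \<le> T - t" using h3[of t T] False by simp
    then show ?thesis using a by force
  qed
  thus ?thesis using psi_iso_global[OF h1 h2 h3] by blast
next
  assume a: "\<forall>t\<le>T. k t - t \<le> K0"
  have b: "k (- t) + t \<le> K0" for t
  proof (cases "-t \<le> T")
    case True then show ?thesis using a by force
  next
    case False
    have "k (-t) - k T \<le> -t - T" using h3[of "-t" T] False by simp
    then show ?thesis using a by force
  qed
  have h1': "\<bar>x - y\<bar> \<le> real n \<longleftrightarrow> \<bar>\<psi> (-x) - \<psi> (-y)\<bar> \<le> real n" for x y n
    using h1[of "-x" "-y" n] by (simp add: abs_minus_commute)
  have h2': "\<bar>k (-x) - k (-y)\<bar> \<le> \<bar>\<psi> (-x) - \<psi> (-y)\<bar>" for x y using h2 by blast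
  have h3': "\<bar>k (-x) - k (-y)\<bar> \<le> \<bar>x - y\<bar>" for x y using h3[of "-x" "-y"] by (simp add: abs_minus_commute)
  have "\<bar>\<psi> (- (-x)) - \<psi> (- (-y))\<bar> = \<bar>(-x) - (-y)\<bar>"
    using psi_iso_global[of "\<lambda>x. \<psi> (-x)" "\<lambda>x. k (-x)" K0, OF h1' h2' h3' b] by blast
  thus ?thesis by (simp add: abs_minus_commute)
qed

lemma chain_le:
  assumes M: "Metric_space X d" and M': "Metric_space X d'" and G: "geodesic_space X d"
    and U: "\<forall>x\<in>X. \<forall>y\<in>X. d x y \<le> 1 \<longleftrightarrow> d' x y \<le> 1"
  shows "x \<in> X \<Longrightarrow> y \<in> X \<Longrightarrow> d x y \<le> real n \<Longrightarrow> d' x y \<le> real n"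
proof (induction n arbitrary: x)
  case 0
  have "d x y = 0" using 0 Metric_space.nonneg[OF M, of x y] by linarith
  hence "x = y" using Metric_space.zero[OF M, of x y] 0 by blast
  then show ?case using Metric_space.zero[OF M', of y y] 0 by simp
next
  case (Suc m)
  show ?case
  proof (cases "d x y \<le> 1")
    case True
    have "d' x y \<le> 1" using U[rule_format, OF Suc.prems(1,2)] True by simp
    then show ?thesis by simp
  next
    case False
    obtain c where c: "geodesic_segment X d c x y" using G Suc.prems unfolding geodesic_space_def by blast
    define D where "D = d x y"
    have c0: "c 0 = x" and cD: "c D = y" and cX: "c ` {0..D} \<subseteq> X"
      and ci: "\<forall>s\<in>{0..D}. \<forall>t\<in>{0..D}. d (c s) (c t) = \<bar>s - t\<bar>"
      using c unfolding geodesic_segment_def D_def by auto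
    have D1: "D > 1" using False by (simp add: D_def)
    have zX: "c 1 \<in> X" using cX D1 by auto
    have "d x (c 1) = 1" using ci[rule_format, of 0 1] D1 c0 by simp
    hence dxz: "d' x (c 1) \<le> 1" using U[rule_format, OF Suc.prems(1) zX] by simp
    have "d (c 1) y = D - 1" using ci[rule_format, of 1 D] D1 cD by simp
    hence "d (c 1) y \<le> real m" using Suc.prems by (simp add: D_def)
    hence "d' (c 1) y \<le> real m" using Suc.IH[OF zX Suc.prems(2)] by blast
    moreover have "d' x y \<le> d' x (c 1) + d' (c 1) y"
      using Metric_space.triangle[OF M' Suc.prems(1) zX Suc.prems(2)] .
    ultimately show ?thesis using dxz by simp
  qed
qed

definition bus :: "('a \<Rightarrow> 'a \<Rightarrow> real) \<Rightarrow> (real \<Rightarrow> 'a) \<Rightarrow> 'a \<Rightarrow> real" where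
  "bus \<delta> r y = (INF s\<in>{0..}. \<delta> (r s) y - s)"

lemma bus_props:
  assumes M: "Metric_space X \<delta>"
    and rX: "\<And>s. s \<ge> 0 \<Longrightarrow> r s \<in> X"
    and ri: "\<And>s t. s \<ge> 0 \<Longrightarrow> t \<ge> 0 \<Longrightarrow> \<delta> (r s) (r t) = \<bar>s - t\<bar>"
    and yX: "y \<in> X"
  shows "\<And>s. s \<ge> 0 \<Longrightarrow> bus \<delta> r y \<le> \<delta> (r s) y - s"
    and "\<And>\<eta>. \<eta> > 0 \<Longrightarrow> \<exists>S. \<forall>s\<ge>S. \<bar>\<delta> (r s) y - s - bus \<delta> r y\<bar> \<le> \<eta>"
proof -
  have lb: "\<delta> (r s) y - s \<ge> - \<delta> (r 0) y" if "s \<ge> 0" for s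
  proof -
    have "\<delta> (r 0) (r s) \<le> \<delta> (r 0) y + \<delta> y (r s)"
      using Metric_space.triangle[OF M] rX yX that by blast
    thus ?thesis using ri[of 0 s] that Metric_space.commute[OF M, of y "r s"] by simp
  qed
  have bdd: "bdd_below ((\<lambda>s. \<delta> (r s) y - s) ` {0..})"
    using lb by (intro bdd_belowI2[where m="- \<delta> (r 0) y"]) auto
  show le: "bus \<delta> r y \<le> \<delta> (r s) y - s" if "s \<ge> 0" for s
    unfolding bus_def using cINF_lower[OF bdd, of s] that by simp
  have mono: "\<delta> (r s') y - s' \<le> \<delta> (r s) y - s" if "0 \<le> s" "s \<le> s'" for s s'
  proof -
    have "\<delta> (r s') y \<le> \<delta> (r s') (r s) + \<delta> (r s) y"
      using Metric_space.triangle[OF M, of "r s'" "r s" y] rX[of s] rX[of s'] yX that by simp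
    thus ?thesis using ri[of s' s] that by simp
  qed
  show "\<exists>S. \<forall>s\<ge>S. \<bar>\<delta> (r s) y - s - bus \<delta> r y\<bar> \<le> \<eta>" if "\<eta> > 0" for \<eta>
  proof -
    have "{0::real..} \<noteq> {}" by auto
    then obtain s0 where s0: "s0 \<in> {0..}" "\<delta> (r s0) y - s0 < bus \<delta> r y + \<eta>"
      using cINF_less_iff[OF _ bdd, of "bus \<delta> r y + \<eta>"] \<open>\<eta> > 0\<close> unfolding bus_def by auto
    have "\<forall>s\<ge>s0. \<bar>\<delta> (r s) y - s - bus \<delta> r y\<bar> \<le> \<eta>"
    proof (intro allI impI)
      fix s assume "s0 \<le> s"
      hence "\<delta> (r s) y - s \<le> \<delta> (r s0) y - s0" "bus \<delta> r y \<le> \<delta> (r s) y - s"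
        using mono le s0 by auto
      thus "\<bar>\<delta> (r s) y - s - bus \<delta> r y\<bar> \<le> \<eta>" using s0 by simp
    qed
    thus ?thesis by blast
  qed
qed

lemma bus_lip:
  assumes M: "Metric_space X \<delta>"
    and rX: "\<And>s. s \<ge> 0 \<Longrightarrow> r s \<in> X"
    and ri: "\<And>s t. s \<ge> 0 \<Longrightarrow> t \<ge> 0 \<Longrightarrow> \<delta> (r s) (r t) = \<bar>s - t\<bar>"
    and yX: "y \<in> X" and zX: "z \<in> X"
  shows "\<bar>bus \<delta> r y - bus \<delta> r z\<bar> \<le> \<delta> y z"
proof -
  have one: "bus \<delta> r y \<le> bus \<delta> r z + \<delta> z y" if yX: "y \<in> X" and zX: "z \<in> X" for y z
  proof -
    have "bus \<delta> r y - \<delta> z y \<le> bus \<delta> r z"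
      unfolding bus_def[of _ _ z]
    proof (rule cINF_greatest)
      show "{0::real..} \<noteq> {}" by auto
      fix s :: real assume "s \<in> {0..}"
      have "bus \<delta> r y \<le> \<delta> (r s) y - s" using bus_props(1)[OF M rX ri yX] \<open>s \<in> {0..}\<close> by auto
      moreover have "\<delta> (r s) y \<le> \<delta> (r s) z + \<delta> z y"
        using Metric_space.triangle[OF M] rX yX zX \<open>s \<in> {0..}\<close> by auto
      ultimately show "bus \<delta> r y - \<delta> z y \<le> \<delta> (r s) z - s" by simp
    qed
    thus ?thesis by simp
  qed
  show ?thesis using one[OF yX zX] one[OF zX yX] Metric_space.commute[OF M, of y z] by linarith
qed

lemma iso_half:
  fixes \<tau> :: "real \<Rightarrow> real"
  assumes "\<And>s t. s \<ge> 0 \<Longrightarrow> t \<ge> 0 \<Longrightarrow> \<bar>\<tau> s - \<tau> t\<bar> = \<bar>s - t\<bar>"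
  shows "(\<forall>t\<ge>0. \<tau> t = \<tau> 0 + t) \<or> (\<forall>t\<ge>0. \<tau> t = \<tau> 0 - t)"
proof (rule ccontr)
  assume "\<not> ?thesis"
  then obtain t1 t2 where t1: "t1 \<ge> 0" "\<tau> t1 \<noteq> \<tau> 0 + t1" and t2: "t2 \<ge> 0" "\<tau> t2 \<noteq> \<tau> 0 - t2" by blast
  have "\<bar>\<tau> t1 - \<tau> 0\<bar> = t1" using assms[of t1 0] t1 by simp
  hence a: "\<tau> t1 = \<tau> 0 - t1" "t1 > 0" using t1 by (auto simp: abs_if split: if_splits)
  have "\<bar>\<tau> t2 - \<tau> 0\<bar> = t2" using assms[of t2 0] t2 by simp
  hence b: "\<tau> t2 = \<tau> 0 + t2" "t2 > 0" using t2 by (auto simp: abs_if split: if_splits)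
  have "\<bar>\<tau> t1 - \<tau> t2\<bar> = \<bar>t1 - t2\<bar>" using assms t1 t2 by blast
  thus False using a b by (simp add: abs_if split: if_splits)
qed

lemma step:
  assumes M: "Metric_space X d" and M': "Metric_space X d'"
   and SC: "\<And>x y n. x \<in> X \<Longrightarrow> y \<in> X \<Longrightarrow> (d x y \<le> real n \<longleftrightarrow> d' x y \<le> real n)"
   and ga: "complete_geodesic X d a" and gb: "complete_geodesic X d b"
   and gg: "complete_geodesic X d' g" and rg: "range g = range b"
   and Ga: "\<forall>t1 t2. d (a t1) (a t2) = d' (a t1) (a t2)"
   and asy: "asymptotic_geodesics X d a b"
  shows "\<forall>t1 t2. d (b t1) (b t2) = d' (b t1) (b t2)"
proof -
  obtain r1 r2 where r1: "geodesic_ray X d r1" and r2: "geodesic_ray X d r2"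
    and r1a: "r1 ` {0..} \<subseteq> range a" and r2b: "r2 ` {0..} \<subseteq> range b"
    and ar: "asymptotic_rays d r1 r2"
    using asy unfolding asymptotic_geodesics_def by blast
  obtain C where C: "\<forall>t\<ge>0. \<exists>s\<ge>0. d (r2 t) (r1 s) \<le> C"
    using ar unfolding asymptotic_rays_def by blast
  have r1X: "r1 s \<in> X" if "s \<ge> 0" for s using r1 that unfolding geodesic_ray_def by auto
  have r2X: "r2 s \<in> X" if "s \<ge> 0" for s using r2 that unfolding geodesic_ray_def by auto
  have r1i: "d (r1 s) (r1 t) = \<bar>s - t\<bar>" if "s \<ge> 0" "t \<ge> 0" for s t
    using r1 that unfolding geodesic_ray_def by auto
  have r2i: "d (r2 s) (r2 t) = \<bar>s - t\<bar>" if "s \<ge> 0" "t \<ge> 0" for s t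
    using r2 that unfolding geodesic_ray_def by auto
  have r1i': "d' (r1 s) (r1 t) = \<bar>s - t\<bar>" if "s \<ge> 0" "t \<ge> 0" for s t
  proof -
    have "r1 s \<in> range a" using r1a \<open>s \<ge> 0\<close> by auto
    then obtain u where u: "r1 s = a u" by auto
    have "r1 t \<in> range a" using r1a \<open>t \<ge> 0\<close> by auto
    then obtain v where v: "r1 t = a v" by auto
    have "d' (a u) (a v) = d (a u) (a v)" using Ga by simp
    thus ?thesis using r1i[OF that] u v by simp
  qed
  have BB: "bus d r1 y = bus d' r1 y" if yX: "y \<in> X" for y
  proof (rule ceil_trick[of 0 "\<lambda>s. d (r1 s) y" "\<lambda>s. d' (r1 s) y"])
    show "d (r1 s) y \<le> real n \<longleftrightarrow> d' (r1 s) y \<le> real n" if "0 \<le> s" for s n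
      using SC[OF r1X[OF that] yX] .
    show "\<exists>S. \<forall>s\<ge>S. \<bar>d (r1 s) y - s - bus d r1 y\<bar> \<le> \<eta>" if "\<eta> > 0" for \<eta>
      using bus_props(2)[OF M, of r1 y, OF r1X r1i yX that] by blast
    show "\<exists>S. \<forall>s\<ge>S. \<bar>d' (r1 s) y - s - bus d' r1 y\<bar> \<le> \<eta>" if "\<eta> > 0" for \<eta>
      using bus_props(2)[OF M', of r1 y, OF r1X r1i' yX that] by blast
  qed
  have bX: "b t \<in> X" for t using gb unfolding complete_geodesic_def by auto
  have bi: "d (b x) (b y) = \<bar>x - y\<bar>" for x y using gb unfolding complete_geodesic_def by auto
  have gi: "d' (g x) (g y) = \<bar>x - y\<bar>" for x y using gg unfolding complete_geodesic_def by auto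
  define \<psi> where "\<psi> t = (SOME u. g u = b t)" for t
  have g\<psi>: "g (\<psi> t) = b t" for t
  proof -
    have "b t \<in> range g" using rg by auto
    then obtain u where "g u = b t" by auto
    thus ?thesis unfolding \<psi>_def by (rule someI)
  qed
  have dpsi: "\<bar>\<psi> x - \<psi> y\<bar> = d' (b x) (b y)" for x y using gi[of "\<psi> x" "\<psi> y"] g\<psi> by simp
  define k where "k t = bus d r1 (b t)" for t
  have h1: "\<bar>x - y\<bar> \<le> real n \<longleftrightarrow> \<bar>\<psi> x - \<psi> y\<bar> \<le> real n" for x y n
    unfolding dpsi bi[of x y, symmetric] using SC[OF bX bX] .
  have h2: "\<bar>k x - k y\<bar> \<le> \<bar>\<psi> x - \<psi> y\<bar>" for x y
    unfolding dpsi k_def BB[OF bX]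
    using bus_lip[OF M', of r1, OF r1X r1i' bX bX] .
  have h3: "\<bar>k x - k y\<bar> \<le> \<bar>x - y\<bar>" for x y
    unfolding bi[of x y, symmetric] k_def
    using bus_lip[OF M, of r1, OF r1X r1i bX bX] .
  define K1 where "K1 = 2 * C + d (r1 0) (r2 0)"
  have bound: "bus d r1 (r2 t) + t \<le> K1" if "t \<ge> 0" for t
  proof -
    obtain s where s: "s \<ge> 0" "d (r2 t) (r1 s) \<le> C" using C \<open>t \<ge> 0\<close> by blast
    have "bus d r1 (r2 t) \<le> d (r1 s) (r2 t) - s"
      using bus_props(1)[OF M, of r1 "r2 t", OF r1X r1i r2X[OF that] s(1)] .
    also have "\<dots> \<le> C - s" using s Metric_space.commute[OF M, of "r1 s" "r2 t"] by simp
    finally have 1: "bus d r1 (r2 t) \<le> C - s" .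
    have "d (r2 0) (r2 t) \<le> d (r2 0) (r1 0) + d (r1 0) (r2 t)"
      using Metric_space.triangle[OF M, of "r2 0" "r1 0" "r2 t"] r1X r2X that by simp
    also have "d (r1 0) (r2 t) \<le> d (r1 0) (r1 s) + d (r1 s) (r2 t)"
      using Metric_space.triangle[OF M, of "r1 0" "r1 s" "r2 t"] r1X r2X that s by simp
    finally have "t \<le> d (r2 0) (r1 0) + s + d (r1 s) (r2 t)"
      using r2i[of 0 t] r1i[of 0 s] that s by simp
    moreover have "d (r2 0) (r1 0) = d (r1 0) (r2 0)" using Metric_space.commute[OF M, of "r2 0" "r1 0"] .
    moreover have "d (r1 s) (r2 t) \<le> C" using s Metric_space.commute[OF M, of "r1 s" "r2 t"] by simp
    ultimately show ?thesis using 1 by (simp add: K1_def)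
  qed
  define \<tau> where "\<tau> t = (SOME u. b u = r2 t)" for t
  have b\<tau>: "b (\<tau> t) = r2 t" if "t \<ge> 0" for t
  proof -
    have "r2 t \<in> range b" using r2b that by auto
    then obtain u where "b u = r2 t" by auto
    thus ?thesis unfolding \<tau>_def by (rule someI)
  qed
  have \<tau>i: "\<bar>\<tau> s - \<tau> t\<bar> = \<bar>s - t\<bar>" if "s \<ge> 0" "t \<ge> 0" for s t
    using bi[of "\<tau> s" "\<tau> t"] b\<tau>[OF that(1)] b\<tau>[OF that(2)] r2i[OF that] by simp
  have h4: "(\<forall>t\<ge>\<tau> 0. k t + t \<le> K1 + \<bar>\<tau> 0\<bar>) \<or> (\<forall>t\<le>\<tau> 0. k t - t \<le> K1 + \<bar>\<tau> 0\<bar>)"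
    using iso_half[OF \<tau>i]
  proof
    assume p: "\<forall>t\<ge>0. \<tau> t = \<tau> 0 + t"
    have "k u + u \<le> K1 + \<bar>\<tau> 0\<bar>" if "u \<ge> \<tau> 0" for u
    proof -
      have t0: "u - \<tau> 0 \<ge> 0" using that by simp
      have "\<tau> (u - \<tau> 0) = u" using p[rule_format, OF t0] by simp
      hence "b u = r2 (u - \<tau> 0)" using b\<tau>[OF t0] by simp
      thus ?thesis using bound[OF t0] by (simp add: k_def)
    qed
    thus ?thesis by blast
  next
    assume p: "\<forall>t\<ge>0. \<tau> t = \<tau> 0 - t"
    have "k u - u \<le> K1 + \<bar>\<tau> 0\<bar>" if "u \<le> \<tau> 0" for u
    proof -
      have t0: "\<tau> 0 - u \<ge> 0" using that by simp
      have "\<tau> (\<tau> 0 - u) = u" using p[rule_format, OF t0] by simp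
      hence "b u = r2 (\<tau> 0 - u)" using b\<tau>[OF t0] by simp
      thus ?thesis using bound[OF t0] by (simp add: k_def)
    qed
    thus ?thesis by blast
  qed
  show ?thesis
  proof (intro allI)
    fix t1 t2
    have "\<bar>\<psi> t1 - \<psi> t2\<bar> = \<bar>t1 - t2\<bar>" using psi_iso[of \<psi> k "\<tau> 0", OF h1 h2 h3 h4] .
    thus "d (b t1) (b t2) = d' (b t1) (b t2)" using dpsi bi by simp
  qed
qed

theorem lemma3:
  fixes X :: "'a set" and d d' :: "'a \<Rightarrow> 'a \<Rightarrow> real"
    and A :: "nat \<Rightarrow> real \<Rightarrow> 'a" and n :: nat
  assumes "Metric_space X d"
    and "locally_compact_space (Metric_space.mtopology X d)"
    and "geodesically_complete X d" and "CAT0 X d"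
    and "connected_at_infinity X d"
    and "Metric_space X d'"
    and "locally_compact_space (Metric_space.mtopology X d')"
    and "geodesically_complete X d'" and "CAT0 X d'"
    and "\<forall>x\<in>X. \<forall>y\<in>X. d x y \<le> 1 \<longleftrightarrow> d' x y \<le> 1"
    and "\<forall>i\<le>n. complete_geodesic X d (A i)"
    and "\<forall>i\<in>{1..n}. asymptotic_geodesics X d (A (i - 1)) (A i)"
    and "\<forall>i\<le>n. \<exists>g. complete_geodesic X d' g \<and> range g = range (A i)"
    and "\<forall>t1 t2. d (A 0 t1) (A 0 t2) = d' (A 0 t1) (A 0 t2)"
  shows "\<forall>t1 t2. d (A n t1) (A n t2) = d' (A n t1) (A n t2)"
proof -
  note M = assms(1) and M' = assms(6) and U = assms(10)
  have G: "geodesic_space X d" using assms(3) unfolding geodesically_complete_def by blast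
  have G': "geodesic_space X d'" using assms(8) unfolding geodesically_complete_def by blast
  have U': "\<forall>x\<in>X. \<forall>y\<in>X. d' x y \<le> 1 \<longleftrightarrow> d x y \<le> 1"
  proof (intro ballI)
    fix x y assume "x \<in> X" "y \<in> X"
    thus "d' x y \<le> 1 \<longleftrightarrow> d x y \<le> 1" using U[rule_format, of x y] by simp
  qed
  have SC: "d x y \<le> real m \<longleftrightarrow> d' x y \<le> real m" if "x \<in> X" "y \<in> X" for x y m
    using chain_le[OF M M' G U that] chain_le[OF M' M G' U' that] by blast
  have "\<forall>t1 t2. d (A i t1) (A i t2) = d' (A i t1) (A i t2)" if "i \<le> n" for i
    using that
  proof (induction i)
    case 0
    then show ?case using assms(14) by blast
  next
    case (Suc i)
    have IH: "\<forall>t1 t2. d (A i t1) (A i t2) = d' (A i t1) (A i t2)" using Suc by simp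
    have "Suc i \<in> {1..n}" using Suc.prems by simp
    hence asy: "asymptotic_geodesics X d (A i) (A (Suc i))" using assms(12) by fastforce
    obtain g where g: "complete_geodesic X d' g" "range g = range (A (Suc i))"
      using assms(13) Suc.prems by blast
    have ga: "complete_geodesic X d (A i)" using assms(11) Suc.prems by simp
    have gb: "complete_geodesic X d (A (Suc i))" using assms(11) Suc.prems by blast
    show ?case by (rule step[OF M M' SC ga gb g IH asy])
  qed
  thus ?thesis by blast
qed

end
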